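(* Let $V$ be a vertex algebra, $g$ an automorphism of $V$ of finite order $T$, and $n,m\in(1/T)\mathbb{N}$. Then the quotient space $\tilde{A}_{g,n,m}(V)=V/\tilde{O}_{g,n,m}(V)$ is an $\tilde{A}_{g,n}(V)$–$\tilde{A}_{g,m}(V)$-bimodule, where the left action is well defined by $(u+\tilde{O}_{g,n}(V))\cdot(w+\tilde{O}_{g,n,m}(V))=u\,\bar{\bullet}_{g,m}^{\,n}\,w+\tilde{O}_{g,n,m}(V)$ and the right action is well defined by $(w+\tilde{O}_{g,n,m}(V))\cdot(v+\tilde{O}_{g,m}(V))=w\bullet_{g,m}^{\,n}v+\tilde{O}_{g,n,m}(V)$, for $u,v,w\in V$.
   Context: $V$ is a vertex algebra with vacuum $\mathbf{1}$, vertex operator $Y(v,x)=\sum_{k\in\mathbb Z}v_kx^{-k-1}$ and $\mathcal{D}v=v_{-2}\mathbf 1$. $g$ is an automorphism ($g\mathbf 1=\mathbf 1$, $gY(u,x)v=Y(gu,x)gv$) with $g^T=1$, and $V=\bigoplus_{r=0}^{T-1}V^r$, $V^r=\{v: gv=e^{-2\pi\sqrt{-1}r/T}v\}$. For $k,l\in\{0,\dots,T-1\}$ let $\delta_k(l)=1$ if $k\ge l$, $\delta_k(l)=0$ if $k<l$, and $\delta_k(T)=0$. Every $n\in(1/T)\mathbb Z$ is written uniquely $n=\lfloor n\rfloor+\bar n/T$ with $\bar n\in\{0,\dots,T-1\}$. Powers $(1+y)^\alpha$ are expanded as binomial series in nonnegative powers of $y$, and $Y(u,\log(1+y))v$ denotes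 $Y(u,x)v\in V((x))$ with $x=\log(1+y)=\sum_{k\ge1}(-1)^{k-1}y^k/k$ substituted. For $u\in V^r$, $v\in V$, $m,n,p\in(1/T)\mathbb N$ with $\bar p-\bar n\equiv r\pmod T$ define $u\bullet_{g,m,p}^{\,n}v=\sum_{i=0}^{\lfloor p\rfloor}(-1)^i\binom{\lfloor m\rfloor+\lfloor n\rfloor-\lfloor p\rfloor-1+\delta_{\bar m}(r)+\delta_{\bar n}(T-r)+i}{i}\operatorname{Res}_y\frac{(1+y)^{-1+\lfloor m\rfloor+\delta_{\bar m}(r)+r/T}}{y^{\lfloor m\rfloor+\lfloor n\rfloor-\lfloor p\rfloor+\delta_{\bar m}(r)+\delta_{\bar n}(T-r)+i}}Y(u,\log(1+y))v,$ and $u\bullet_{g,m,p}^{\,n}v=0$ if $\bar p-\bar n\not\equiv r\pmod T$; extend bilinearly. Put $\bar\bullet_{g,m}^{\,n}=\bullet_{g,m,n}^{\,n}$, $\bullet_{g,m}^{\,n}=\bullet_{g,m,m}^{\,n}$, $\bullet_{g,n}=\bullet_{g,n,n}^{\,n}$. For $u\in V^r,v\in V$: $u\diamond_{g,m}^{\,n}v=\operatorname{Res}_y\frac{(1+y)^{-1+\delta_{\bar m}(r)+\lfloor m\rfloor+r/T}}{y^{\lfloor m\rfloor+\lfloor n\rfloor+\delta_{\bar m}(r)+\delta_{\bar n}(T-r)+1}}Y(u,\log(1+y))v$ (extended bilinearly). Let $L_{n,m}(V)=\mathrm{span}\{(\mathcal D+m-n)u:u\in V\}$ and $\tilde O'_{g,n,m}(V)=\mathrm{span}\{u\diamond_{g,m}^{\,n}v:u,v\in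 V\}+L_{n,m}(V)$. Let $\tilde O''_{g,n,m}(V)$ be the span of all $u\bullet_{g,m,p_3}^{\,n}\big((a\bullet_{g,p_1,p_2}^{\,p_3}b)\bullet_{g,m,p_1}^{\,p_3}c-a\bullet_{g,m,p_2}^{\,p_3}(b\bullet_{g,m,p_1}^{\,p_2}c)\big)$ with $a,b,c,u\in V$, $p_1,p_2,p_3\in(1/T)\mathbb N$; let $\tilde O'''_{g,n,m}(V)=\sum_{p_1,p_2\in(1/T)\mathbb N}\big(V\bullet_{g,p_1,p_2}^{\,n}\tilde O'_{g,p_2,p_1}(V)\big)\bullet_{g,m,p_1}^{\,n}V$ (spans of such products); and $\tilde O_{g,n,m}(V)=\tilde O'_{g,n,m}(V)+\tilde O''_{g,n,m}(V)+\tilde O'''_{g,n,m}(V)$. Finally $\tilde O_{g,n}(V)=\tilde O'_{g,n,n}(V)$ and $\tilde A_{g,n}(V)=V/\tilde O_{g,n}(V)$, which is an associative algebra with product induced by $\bullet_{g,n}$ and unit $\mathbf 1+\tilde O_{g,n}(V)$. *)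

theory Defs
  imports "HOL-Analysis.Analysis" "HOL-Library.Groups_Big_Fun"
    "HOL-Computational_Algebra.Formal_Laurent_Series"
begin

text \<open>A vertex algebra is given by a complex vector space 'v (scalar multiplication sm),
  the modes mode u k v = u_k v of the vertex operator Y(u,x) v = sum_k u_k v x^(-k-1),
  and the vacuum vac. Axioms: bilinearity, truncation (Y(u,x)v in V((x))), vacuum axioms
  and the Jacobi identity in its equivalent Borcherds-identity form (componentwise).\<close>

definition vertex_algebra ::
  "(complex \<Rightarrow> 'v::ab_group_add \<Rightarrow> 'v) \<Rightarrow> ('v \<Rightarrow> int \<Rightarrow> 'v \<Rightarrow> 'v) \<Rightarrow> 'v \<Rightarrow> bool" where
  "vertex_algebra sm mode vac \<longleftrightarrow>
     Vector_Spaces.vector_space sm \<and>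
     (\<forall>k v. Vector_Spaces.linear sm sm (\<lambda>u. mode u k v)) \<and>
     (\<forall>u k. Vector_Spaces.linear sm sm (\<lambda>v. mode u k v)) \<and>
     (\<forall>u v. \<exists>N. \<forall>k\<ge>N. mode u k v = 0) \<and>
     (\<forall>k v. mode vac k v = (if k = -1 then v else 0)) \<and>
     (\<forall>u. mode u (-1) vac = u) \<and>
     (\<forall>u k. k \<ge> 0 \<longrightarrow> mode u k vac = 0) \<and>
     (\<forall>u v w p q r.
        Sum_any (\<lambda>i::nat. sm ((of_int p :: complex) gchoose i)
                    (mode (mode u (r + int i) v) (p + q - int i) w))
      = Sum_any (\<lambda>i::nat. sm ((-1) ^ i * ((of_int r :: complex) gchoose i))
                    (mode u (p + r - int i) (mode v (q + int i) w)
                     - sm ((-1) powi r) (mode v (q + r - int i) (mode u (p + int i) w)))))"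

definition va_automorphism ::
  "(complex \<Rightarrow> 'v::ab_group_add \<Rightarrow> 'v) \<Rightarrow> ('v \<Rightarrow> int \<Rightarrow> 'v \<Rightarrow> 'v) \<Rightarrow> 'v \<Rightarrow> ('v \<Rightarrow> 'v) \<Rightarrow> nat \<Rightarrow> bool" where
  "va_automorphism sm mode vac g T \<longleftrightarrow>
     Vector_Spaces.linear sm sm g \<and> bij g \<and> g vac = vac \<and>
     (\<forall>u k v. g (mode u k v) = mode (g u) k (g v)) \<and>
     T > 0 \<and> g ^^ T = id"

text \<open>Projection of V onto the eigenspace V^r = {v. g v = exp(-2 pi i r/T) v}.\<close>

definition proj ::
  "(complex \<Rightarrow> 'v::ab_group_add \<Rightarrow> 'v) \<Rightarrow> ('v \<Rightarrow> 'v) \<Rightarrow> nat \<Rightarrow> nat \<Rightarrow> 'v \<Rightarrow> 'v" where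
  "proj sm g T r u =
     sm (1 / of_nat T)
       (\<Sum>j<T. sm (exp (2 * of_real pi * \<i> * of_nat j * of_nat r / of_nat T)) ((g ^^ j) u))"

definition delta :: "nat \<Rightarrow> nat \<Rightarrow> int" where
  "delta k l = (if l \<le> k then 1 else 0)"

text \<open>resY alpha K u v = Res_y (1+y)^alpha / y^K * Y(u, log(1+y)) v, computed termwise:
  the coefficient of u_k v is the residue of (1+y)^alpha (log(1+y))^(-k-1) y^(-K)
  as a formal Laurent series; only finitely many terms are nonzero.\<close>

definition resY ::
  "(complex \<Rightarrow> 'v::ab_group_add \<Rightarrow> 'v) \<Rightarrow> ('v \<Rightarrow> int \<Rightarrow> 'v \<Rightarrow> 'v) \<Rightarrow> complex \<Rightarrow> int \<Rightarrow> 'v \<Rightarrow> 'v \<Rightarrow> 'v" where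
  "resY sm mode alpha K u v =
     Sum_any (\<lambda>k::int. sm
        (fls_residue (fps_to_fls (fps_binomial alpha)
                      * (fps_to_fls (fps_ln 1)) powi (- k - 1)
                      * fls_X_intpow (- K)))
        (mode u k v))"

text \<open>Elements of (1/T)N are represented by their numerators: the natural number M stands for
  m = M/T, so floor m = M div T and bar m = M mod T.\<close>

text \<open>u bullet_{g,m,p}^n v for u in V^r (homogeneous case); arguments M P N.\<close>

definition bullet_hom ::
  "(complex \<Rightarrow> 'v::ab_group_add \<Rightarrow> 'v) \<Rightarrow> ('v \<Rightarrow> int \<Rightarrow> 'v \<Rightarrow> 'v) \<Rightarrow> nat \<Rightarrow> nat
   \<Rightarrow> nat \<Rightarrow> nat \<Rightarrow> nat \<Rightarrow> 'v \<Rightarrow> 'v \<Rightarrow> 'v" where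
  "bullet_hom sm mode T r M P N u v =
     (let fm = int (M div T); fn = int (N div T); fp = int (P div T);
          dm = delta (M mod T) r; dn = delta (N mod T) (T - r)
      in if (int (P mod T) - int (N mod T)) mod int T = int r mod int T then
           (\<Sum>i\<in>{0..P div T}.
              sm ((-1) ^ i * ((of_int (fm + fn - fp - 1 + dm + dn + int i) :: complex) gchoose i))
                (resY sm mode (-1 + of_int fm + of_int dm + of_nat r / of_nat T)
                   (fm + fn - fp + dm + dn + int i) u v))
         else 0)"

text \<open>Bilinear extension: bullet M P N u v = u bullet_{g,m,p}^n v.\<close>

definition bullet ::
  "(complex \<Rightarrow> 'v::ab_group_add \<Rightarrow> 'v) \<Rightarrow> ('v \<Rightarrow> int \<Rightarrow> 'v \<Rightarrow> 'v) \<Rightarrow> ('v \<Rightarrow> 'v) \<Rightarrow> nat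
   \<Rightarrow> nat \<Rightarrow> nat \<Rightarrow> nat \<Rightarrow> 'v \<Rightarrow> 'v \<Rightarrow> 'v" where
  "bullet sm mode g T M P N u v =
     (\<Sum>r<T. bullet_hom sm mode T r M P N (proj sm g T r u) v)"

text \<open>u diamond_{g,m}^n v; arguments M N.\<close>

definition diamond_hom ::
  "(complex \<Rightarrow> 'v::ab_group_add \<Rightarrow> 'v) \<Rightarrow> ('v \<Rightarrow> int \<Rightarrow> 'v \<Rightarrow> 'v) \<Rightarrow> nat
   \<Rightarrow> nat \<Rightarrow> nat \<Rightarrow> nat \<Rightarrow> 'v \<Rightarrow> 'v \<Rightarrow> 'v" where
  "diamond_hom sm mode T r M N u v =
     (let fm = int (M div T); fn = int (N div T);
          dm = delta (M mod T) r; dn = delta (N mod T) (T - r)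
      in resY sm mode (-1 + of_int dm + of_int fm + of_nat r / of_nat T)
           (fm + fn + dm + dn + 1) u v)"

definition diamond ::
  "(complex \<Rightarrow> 'v::ab_group_add \<Rightarrow> 'v) \<Rightarrow> ('v \<Rightarrow> int \<Rightarrow> 'v \<Rightarrow> 'v) \<Rightarrow> ('v \<Rightarrow> 'v) \<Rightarrow> nat
   \<Rightarrow> nat \<Rightarrow> nat \<Rightarrow> 'v \<Rightarrow> 'v \<Rightarrow> 'v" where
  "diamond sm mode g T M N u v =
     (\<Sum>r<T. diamond_hom sm mode T r M N (proj sm g T r u) v)"

text \<open>L_{n,m}(V) = span{(D + m - n) u}, with D u = u_{-2} vac.\<close>

definition Lnm ::
  "(complex \<Rightarrow> 'v::ab_group_add \<Rightarrow> 'v) \<Rightarrow> ('v \<Rightarrow> int \<Rightarrow> 'v \<Rightarrow> 'v) \<Rightarrow> 'v \<Rightarrow> nat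
   \<Rightarrow> nat \<Rightarrow> nat \<Rightarrow> 'v set" where
  "Lnm sm mode vac T N M =
     module.span sm
       {mode u (-2) vac + sm ((of_nat M - of_nat N) / of_nat T) u | u. True}"

definition O1 ::
  "(complex \<Rightarrow> 'v::ab_group_add \<Rightarrow> 'v) \<Rightarrow> ('v \<Rightarrow> int \<Rightarrow> 'v \<Rightarrow> 'v) \<Rightarrow> 'v \<Rightarrow> ('v \<Rightarrow> 'v)
   \<Rightarrow> nat \<Rightarrow> nat \<Rightarrow> nat \<Rightarrow> 'v set" where
  "O1 sm mode vac g T N M =
     {x + y | x y. x \<in> module.span sm {diamond sm mode g T M N u v | u v. True}
                 \<and> y \<in> Lnm sm mode vac T N M}"

definition O2 ::
  "(complex \<Rightarrow> 'v::ab_group_add \<Rightarrow> 'v) \<Rightarrow> ('v \<Rightarrow> int \<Rightarrow> 'v \<Rightarrow> 'v) \<Rightarrow> ('v \<Rightarrow> 'v)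
   \<Rightarrow> nat \<Rightarrow> nat \<Rightarrow> nat \<Rightarrow> 'v set" where
  "O2 sm mode g T N M =
     module.span sm
       {bullet sm mode g T M P3 N u
          (bullet sm mode g T M P1 P3 (bullet sm mode g T P1 P2 P3 a b) c
           - bullet sm mode g T M P2 P3 a (bullet sm mode g T M P1 P2 b c))
        | u a b c P1 P2 P3. True}"

definition O3 ::
  "(complex \<Rightarrow> 'v::ab_group_add \<Rightarrow> 'v) \<Rightarrow> ('v \<Rightarrow> int \<Rightarrow> 'v \<Rightarrow> 'v) \<Rightarrow> 'v \<Rightarrow> ('v \<Rightarrow> 'v)
   \<Rightarrow> nat \<Rightarrow> nat \<Rightarrow> nat \<Rightarrow> 'v set" where
  "O3 sm mode vac g T N M =
     module.span sm
       {bullet sm mode g T M P1 N (bullet sm mode g T P1 P2 N a x) b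
        | a b x P1 P2. x \<in> O1 sm mode vac g T P2 P1}"

definition Onm ::
  "(complex \<Rightarrow> 'v::ab_group_add \<Rightarrow> 'v) \<Rightarrow> ('v \<Rightarrow> int \<Rightarrow> 'v \<Rightarrow> 'v) \<Rightarrow> 'v \<Rightarrow> ('v \<Rightarrow> 'v)
   \<Rightarrow> nat \<Rightarrow> nat \<Rightarrow> nat \<Rightarrow> 'v set" where
  "Onm sm mode vac g T N M =
     {x + y + z | x y z. x \<in> O1 sm mode vac g T N M \<and> y \<in> O2 sm mode g T N M
                         \<and> z \<in> O3 sm mode vac g T N M}"

definition On ::
  "(complex \<Rightarrow> 'v::ab_group_add \<Rightarrow> 'v) \<Rightarrow> ('v \<Rightarrow> int \<Rightarrow> 'v \<Rightarrow> 'v) \<Rightarrow> 'v \<Rightarrow> ('v \<Rightarrow> 'v)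
   \<Rightarrow> nat \<Rightarrow> nat \<Rightarrow> 'v set" where
  "On sm mode vac g T N = O1 sm mode vac g T N N"

end

theory Submission
  imports Defs
begin

unbundle fps_syntax

lemma exp_ln_binomial:
  "(fps_exp (c::complex) oo fps_ln 1) = fps_binomial c"
proof -
  let ?a = "fps_exp c oo fps_ln 1"
  have d: "fps_deriv ?a = fps_const c * ?a * inverse (1 + fps_X)"
    by (simp add: fps_compose_deriv fps_ln_deriv fps_const_mult_apply_left[symmetric] mult.assoc)
  have "fps_deriv ?a = fps_const c * ?a / (1 + fps_X)"
    using d by (simp add: fps_divide_unit)
  moreover have "?a $ 0 = 1" by simp
  ultimately show ?thesis using fps_binomial_ODE_unique' by blast
qed

lemma ln_pow_nth_below: "m < j \<Longrightarrow> (fps_ln (1::complex) ^ j) $ m = 0"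
  by (simp add: startsby_zero_power_prefix)

lemma compose_nth_trunc:
  assumes "m \<le> n"
  shows "(fps_exp (c::complex) oo fps_ln 1) $ m = (\<Sum>j\<in>{0..n}. c^j / fact j * (fps_ln 1 ^ j) $ m)"
proof -
  have "(fps_exp c oo fps_ln 1) $ m = (\<Sum>j\<in>{0..m}. c^j / fact j * (fps_ln 1 ^ j) $ m)"
    by (simp add: fps_compose_nth)
  also have "\<dots> = (\<Sum>j\<in>{0..n}. c^j / fact j * (fps_ln 1 ^ j) $ m)"
    using assms by (intro sum.mono_neutral_left) (auto simp: ln_pow_nth_below)
  finally show ?thesis .
qed

lemma scalar_identity:
  "(\<Sum>j\<in>{0..n}. c^j / fact j * (fps_binomial a * fps_ln 1 ^ j) $ n) = (a + c) gchoose n"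
  for a c :: complex
proof -
  have "(a + c) gchoose n = (fps_binomial a * (fps_exp c oo fps_ln 1)) $ n"
    by (simp add: exp_ln_binomial fps_binomial_add_mult[symmetric])
  also have "\<dots> = (\<Sum>i\<in>{0..n}. fps_binomial a $ i * (fps_exp c oo fps_ln 1) $ (n - i))"
    by (simp add: fps_mult_nth)
  also have "\<dots> = (\<Sum>i\<in>{0..n}. fps_binomial a $ i * (\<Sum>j\<in>{0..n}. c^j / fact j * (fps_ln 1 ^ j) $ (n - i)))"
    by (intro sum.cong refl, subst compose_nth_trunc[of _ n]) auto
  also have "\<dots> = (\<Sum>j\<in>{0..n}. c^j / fact j * (\<Sum>i\<in>{0..n}. fps_binomial a $ i * (fps_ln 1 ^ j) $ (n - i)))"
    unfolding sum_distrib_left by (subst sum.swap) (simp add: mult.left_commute)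
  also have "\<dots> = (\<Sum>j\<in>{0..n}. c^j / fact j * (fps_binomial a * fps_ln 1 ^ j) $ n)"
    by (simp add: fps_mult_nth)
  finally show ?thesis by simp
qed

definition cres :: "complex \<Rightarrow> int \<Rightarrow> int \<Rightarrow> complex" where
  "cres alpha K k = fls_residue (fps_to_fls (fps_binomial alpha)
                      * (fps_to_fls (fps_ln 1)) powi (- k - 1)
                      * fls_X_intpow (- K))"

lemma cres_neg:
  "cres a K (- int j - 1) = (if 1 \<le> K then (fps_binomial a * fps_ln 1 ^ j) $ nat (K - 1) else 0)"
proof -
  have e: "- (- int j - 1) - 1 = int j" by simp
  have "cres a K (- int j - 1) = fls_residue (fps_to_fls (fps_binomial a * fps_ln 1 ^ j) * fls_X_intpow (- K))"
    unfolding cres_def e power_int_of_nat by (simp add: fls_times_fps_to_fls fps_to_fls_power)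
  also have "\<dots> = fls_nth (fps_to_fls (fps_binomial a * fps_ln 1 ^ j)) (K - 1)"
    by (simp only: fls_X_intpow_times_conv_shift fls_residue_def fls_shift_nth) simp
  finally show ?thesis by simp
qed

lemma prod_ln_nth_below: "m < j \<Longrightarrow> (fps_binomial a * fps_ln (1::complex) ^ j) $ m = 0"
  by (simp add: fps_mult_nth ln_pow_nth_below)

lemma cres_zero: assumes "k < 0" "k < - K" shows "cres a K k = 0"
proof -
  define j where "j = nat (- k - 1)"
  have j: "k = - int j - 1" using assms(1) unfolding j_def by simp
  show ?thesis using assms j by (auto simp: cres_neg intro!: prod_ln_nth_below)
qed

definition W :: "nat \<Rightarrow> nat \<Rightarrow> complex" where
  "W T j = exp (2 * of_real pi * \<i> * of_nat j / of_nat T)"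

lemma W_add: "W T (a + b) = W T a * W T b"
  unfolding W_def by (simp add: exp_add[symmetric] add_divide_distrib distrib_left)

lemma W_mult: "W T (a * b) = W T a ^ b"
  unfolding W_def by (simp add: exp_of_nat_mult[symmetric] mult_ac)

lemma W_T: "T > 0 \<Longrightarrow> W T T = 1"
  unfolding W_def by simp

lemma W_one_iff: "T > 0 \<Longrightarrow> W T j = 1 \<longleftrightarrow> T dvd j"
  unfolding W_def using complex_root_unity_eq_1[of T j] by simp

lemma W_nonzero: "W T j \<noteq> 0" unfolding W_def by simp

lemma rou_sum: assumes "T > 0" shows "(\<Sum>i<T. W T j ^ i) = (if T dvd j then of_nat T else 0)"
proof (cases "T dvd j")
  case True then show ?thesis using assms W_one_iff[of T j] by simp
next
  case False
  have "W T j ^ T = 1" using assms by (metis W_mult W_T mult.commute power_one)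
  then show ?thesis using False assms W_one_iff[of T j] by (simp add: sum_gp_strict)
qed


lemma sum_shift_periodic:
  fixes f :: "nat \<Rightarrow> 'a::ab_group_add"
  assumes "f n = f 0" shows "(\<Sum>j<n. f (Suc j)) = (\<Sum>j<n. f j)"
proof -
  have "f 0 + (\<Sum>j<n. f (Suc j)) = (\<Sum>j<n. f j) + f n"
    using sum.lessThan_Suc_shift[of f n] sum.lessThan_Suc[of f n] by simp
  then show ?thesis using assms by (simp add: add.commute)
qed

lemma sum_only0: "(\<And>i. i \<noteq> 0 \<Longrightarrow> f i = 0) \<Longrightarrow> sum f {0..(n::nat)} = f 0"
  by (subst sum.mono_neutral_right[of "{0..n}" "{0}"]) auto

lemma sum_only0': "(\<And>i. i \<noteq> 0 \<Longrightarrow> i < n \<Longrightarrow> f i = 0) \<Longrightarrow> 0 < (n::nat) \<Longrightarrow> sum f {..<n} = f 0"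
  by (subst sum.mono_neutral_right[of "{..<n}" "{0}"]) auto

locale VAL =
  fixes sm :: "complex \<Rightarrow> 'v::ab_group_add \<Rightarrow> 'v" and mode :: "'v \<Rightarrow> int \<Rightarrow> 'v \<Rightarrow> 'v"
    and vac :: 'v and g :: "'v \<Rightarrow> 'v" and T :: nat
  assumes VA: "vertex_algebra sm mode vac" and aut: "va_automorphism sm mode vac g T"
begin

sublocale V: vector_space sm using VA by (simp add: vertex_algebra_def)

definition lin :: "('v \<Rightarrow> 'v) \<Rightarrow> bool" where
  "lin f \<longleftrightarrow> (\<forall>x y. f (x + y) = f x + f y) \<and> (\<forall>c x. f (sm c x) = sm c (f x))"

lemma lin_linear: "lin f \<longleftrightarrow> Vector_Spaces.linear sm sm f"
  unfolding lin_def Vector_Spaces.linear_iff using V.vector_space_axioms by auto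

lemma lin_add: "lin f \<Longrightarrow> f (x + y) = f x + f y" by (simp add: lin_def)
lemma lin_scale: "lin f \<Longrightarrow> f (sm c x) = sm c (f x)" by (simp add: lin_def)
lemma lin_0: "lin f \<Longrightarrow> f 0 = 0"
  by (metis V.scale_zero_left lin_scale)
lemma lin_diff: "lin f \<Longrightarrow> f (x - y) = f x - f y"
  by (metis add_diff_cancel diff_add_cancel lin_add)
lemma lin_sum: "lin f \<Longrightarrow> f (sum h A) = (\<Sum>i\<in>A. f (h i))"
  by (induction A rule: infinite_finite_induct) (auto simp: lin_0 lin_add)
lemma lin_id: "lin (\<lambda>x. x)" by (simp add: lin_def)
lemma lin_comp: "lin f \<Longrightarrow> lin h \<Longrightarrow> lin (\<lambda>x. f (h x))" by (simp add: lin_def)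
lemma lin_sumf: "(\<And>i. i \<in> A \<Longrightarrow> lin (F i)) \<Longrightarrow> lin (\<lambda>x. \<Sum>i\<in>A. F i x)"
  unfolding lin_def by (auto simp: sum.distrib V.scale_sum_right)
lemma lin_smul: "lin f \<Longrightarrow> lin (\<lambda>x. sm c (f x))"
  unfolding lin_def by (auto simp: V.scale_right_distrib V.scale_left_commute)
lemma lin_zerof: "lin (\<lambda>x. 0)" by (simp add: lin_def)
lemma lin_if: "lin f \<Longrightarrow> lin h \<Longrightarrow> lin (\<lambda>x. if P then f x else h x)" by (cases P) auto

lemma span_lin_closed:
  assumes "lin f" "\<And>x. x \<in> S \<Longrightarrow> f x \<in> V.span S'" "x \<in> V.span S"
  shows "f x \<in> V.span S'"
  using assms(3)
proof (induction rule: V.span_induct_alt)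
  case base then show ?case using lin_0[OF assms(1)] V.span_zero by simp
next
  case (step c x y)
  then show ?case using assms(2)[OF step(1)]
    by (simp add: lin_add[OF assms(1)] lin_scale[OF assms(1)] V.span_add V.span_scale)
qed

lemma mode_lin1: "lin (\<lambda>u. mode u k v)" using VA unfolding vertex_algebra_def lin_linear by blast
lemma mode_lin2: "lin (\<lambda>v. mode u k v)" using VA unfolding vertex_algebra_def lin_linear by blast
lemma mode_trunc: "\<exists>N. \<forall>k\<ge>N. mode u k v = 0" using VA unfolding vertex_algebra_def by blast
lemma mode_vac: "mode vac k v = (if k = -1 then v else 0)" using VA unfolding vertex_algebra_def by blast
lemma creation: "mode u (-1) vac = u" using VA unfolding vertex_algebra_def by blast
lemma mode_pos_vac: "k \<ge> 0 \<Longrightarrow> mode u k vac = 0" using VA unfolding vertex_algebra_def by blast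
lemma borch: "Sum_any (\<lambda>i::nat. sm ((of_int p :: complex) gchoose i)
                    (mode (mode u (r + int i) v) (p + q - int i) w))
      = Sum_any (\<lambda>i::nat. sm ((-1) ^ i * ((of_int r :: complex) gchoose i))
                    (mode u (p + r - int i) (mode v (q + int i) w)
                     - sm ((-1) powi r) (mode v (q + r - int i) (mode u (p + int i) w))))"
  using VA unfolding vertex_algebra_def by blast

lemma g_lin: "lin g" using aut unfolding va_automorphism_def lin_linear by blast
lemma g_vac: "g vac = vac" using aut unfolding va_automorphism_def by blast
lemma T_pos: "T > 0" using aut unfolding va_automorphism_def by blast
lemma g_T: "(g ^^ T) x = x" using aut unfolding va_automorphism_def by simp

end

context VAL begin

lemma resY_Sum_any: "resY sm mode a K u v = Sum_any (\<lambda>k. sm (cres a K k) (mode u k v))"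
  by (simp add: resY_def cres_def)

lemma resY_sum: assumes "\<forall>k\<ge>Nb. mode u k v = 0"
  shows "resY sm mode a K u v = (\<Sum>k\<in>{min 0 (-K)..<Nb}. sm (cres a K k) (mode u k v))"
  unfolding resY_Sum_any
proof (rule Sum_any.expand_superset)
  show "finite {min 0 (-K)..<Nb}" by simp
  show "{k. sm (cres a K k) (mode u k v) \<noteq> 0} \<subseteq> {min 0 (-K)..<Nb}"
  proof
    fix k assume "k \<in> {k. sm (cres a K k) (mode u k v) \<noteq> 0}"
    then have ne: "sm (cres a K k) (mode u k v) \<noteq> 0" by simp
    have "k < Nb" using ne assms by (metis V.scale_zero_right not_le)
    moreover have "min 0 (-K) \<le> k" using ne cres_zero[of k K a]
      by (metis V.scale_zero_left min_le_iff_disj not_le)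
    ultimately show "k \<in> {min 0 (-K)..<Nb}" by simp
  qed
qed

lemma resY_lin1: "lin (\<lambda>u. resY sm mode a K u v)"
  unfolding lin_def
proof (intro conjI allI)
  fix x y
  obtain N1 where N1: "\<forall>k\<ge>N1. mode x k v = 0" using mode_trunc by blast
  obtain N2 where N2: "\<forall>k\<ge>N2. mode y k v = 0" using mode_trunc by blast
  let ?N = "max N1 N2"
  have h1: "\<forall>k\<ge>?N. mode x k v = 0" "\<forall>k\<ge>?N. mode y k v = 0" "\<forall>k\<ge>?N. mode (x+y) k v = 0"
    using N1 N2 by (auto simp: lin_add[OF mode_lin1])
  show "resY sm mode a K (x + y) v = resY sm mode a K x v + resY sm mode a K y v"
    by (simp add: resY_sum[OF h1(1)] resY_sum[OF h1(2)] resY_sum[OF h1(3)] lin_add[OF mode_lin1]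
        V.scale_right_distrib sum.distrib)
next
  fix c x
  obtain N1 where N1: "\<forall>k\<ge>N1. mode x k v = 0" using mode_trunc by blast
  have h: "\<forall>k\<ge>N1. mode (sm c x) k v = 0" using N1 by (simp add: lin_scale[OF mode_lin1])
  show "resY sm mode a K (sm c x) v = sm c (resY sm mode a K x v)"
    by (simp add: resY_sum[OF N1] resY_sum[OF h] lin_scale[OF mode_lin1] V.scale_sum_right V.scale_left_commute mult.commute)
qed

lemma resY_lin2: "lin (\<lambda>v. resY sm mode a K u v)"
  unfolding lin_def
proof (intro conjI allI)
  fix x y
  obtain N1 where N1: "\<forall>k\<ge>N1. mode u k x = 0" using mode_trunc by blast
  obtain N2 where N2: "\<forall>k\<ge>N2. mode u k y = 0" using mode_trunc by blast
  let ?N = "max N1 N2"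
  have h1: "\<forall>k\<ge>?N. mode u k x = 0" "\<forall>k\<ge>?N. mode u k y = 0" "\<forall>k\<ge>?N. mode u k (x+y) = 0"
    using N1 N2 by (auto simp: lin_add[OF mode_lin2])
  show "resY sm mode a K u (x + y) = resY sm mode a K u x + resY sm mode a K u y"
    by (simp add: resY_sum[OF h1(1)] resY_sum[OF h1(2)] resY_sum[OF h1(3)] lin_add[OF mode_lin2]
        V.scale_right_distrib sum.distrib)
next
  fix c x
  obtain N1 where N1: "\<forall>k\<ge>N1. mode u k x = 0" using mode_trunc by blast
  have h: "\<forall>k\<ge>N1. mode u k (sm c x) = 0" using N1 by (simp add: lin_scale[OF mode_lin2])
  show "resY sm mode a K u (sm c x) = sm c (resY sm mode a K u x)"
    by (simp add: resY_sum[OF N1] resY_sum[OF h] lin_scale[OF mode_lin2] V.scale_sum_right V.scale_left_commute mult.commute)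
qed

lemma resY_vac_left: "resY sm mode a K vac w = sm (cres a K (-1)) w"
  unfolding resY_Sum_any
  by (subst Sum_any.expand_superset[of "{-1}"]) (auto simp: mode_vac)

lemma gpow_lin: "lin (g ^^ j)"
proof (induction j)
  case 0 show ?case using lin_id by (simp add: id_def)
next
  case (Suc j) show ?case using lin_comp[OF g_lin Suc] by simp
qed

lemma proj_alt: "proj sm g T r u = sm (1 / of_nat T) (\<Sum>j<T. sm (W T r ^ j) ((g ^^ j) u))"
  unfolding proj_def W_def
  by (intro arg_cong[where f="sm _"] sum.cong refl arg_cong2[where f=sm])
     (simp add: exp_of_nat_mult[symmetric] field_simps)

lemma proj_lin: "lin (proj sm g T r)"
  unfolding proj_alt[abs_def]
  by (intro lin_smul lin_sumf lin_smul gpow_lin[unfolded lin_def, folded lin_def])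

end

context VAL begin

lemma W_pow_T: "W T r ^ T = 1"
  using T_pos by (metis W_mult W_T mult.commute power_one)

lemma W_swap: "W T r ^ j = W T j ^ r" by (metis W_mult mult.commute)

lemma S_eigen:
  "sm (W T r) (g (\<Sum>j<T. sm (W T r ^ j) ((g ^^ j) x))) = (\<Sum>j<T. sm (W T r ^ j) ((g ^^ j) x))"
proof -
  let ?f = "\<lambda>j. sm (W T r ^ j) ((g ^^ j) x)"
  have "sm (W T r) (g (\<Sum>j<T. ?f j)) = (\<Sum>j<T. ?f (Suc j))"
    by (simp add: lin_sum[OF g_lin] lin_scale[OF g_lin] V.scale_sum_right mult.commute)
  also have "\<dots> = (\<Sum>j<T. ?f j)"
    by (rule sum_shift_periodic) (simp add: W_pow_T g_T)
  finally show ?thesis .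
qed

lemma g_proj: "r \<le> T \<Longrightarrow> g (proj sm g T r x) = sm (W T (T - r)) (proj sm g T r x)"
proof -
  assume r: "r \<le> T"
  let ?S = "\<Sum>j<T. sm (W T r ^ j) ((g ^^ j) x)"
  have WW: "W T (T - r) * W T r = 1" using r W_add[of T "T - r" r] W_T[OF T_pos] by simp
  have "sm (W T (T - r)) ?S = sm (W T (T - r)) (sm (W T r) (g ?S))" using S_eigen by simp
  also have "\<dots> = g ?S" using WW by simp
  finally have e: "g ?S = sm (W T (T - r)) ?S" by simp
  show ?thesis unfolding proj_alt lin_scale[OF g_lin] e by (simp add: mult.commute)
qed

lemma gpow_proj: "r \<le> T \<Longrightarrow> (g ^^ j) (proj sm g T r x) = sm (W T (T - r) ^ j) (proj sm g T r x)"
  by (induction j) (auto simp: g_proj lin_scale[OF g_lin] mult.commute)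

lemma dvd_aux: "r < T \<Longrightarrow> r' < T \<Longrightarrow> T dvd (r' + T - r) \<longleftrightarrow> r' = r"
proof
  assume a: "r < T" "r' < T" "T dvd (r' + T - r)"
  then obtain q where q: "r' + T - r = T * q" by (auto simp: dvd_def)
  have "T * q > 0" using q a by linarith
  then have "q \<noteq> 0" by auto
  moreover have "T * q < T * 2" using q a by linarith
  then have "q < 2" by simp
  ultimately have "q = 1" by linarith
  then show "r' = r" using q a by simp
qed simp

lemma proj_proj: assumes "r < T" "r' < T"
  shows "proj sm g T r' (proj sm g T r x) = (if r' = r then proj sm g T r x else 0)"
proof -
  let ?y = "proj sm g T r x"
  have "proj sm g T r' ?y = sm (1 / of_nat T) (\<Sum>j<T. sm (W T (r' + (T - r)) ^ j) ?y)"
    unfolding proj_alt[of r' ?y] using assms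
    by (simp add: gpow_proj power_mult_distrib[symmetric] W_add[symmetric] del: proj_alt)
  also have "\<dots> = sm (1 / of_nat T * (\<Sum>j<T. W T (r' + (T - r)) ^ j)) ?y"
    by (simp only: V.scale_sum_left[symmetric] V.scale_scale)
  also have "\<dots> = (if r' = r then ?y else 0)"
    using T_pos assms by (simp add: rou_sum dvd_aux del: proj_alt)
  finally show ?thesis .
qed

lemma sum_proj: "(\<Sum>r<T. proj sm g T r x) = x"
proof -
  have "(\<Sum>r<T. proj sm g T r x) = sm (1 / of_nat T) (\<Sum>j<T. sm (\<Sum>r<T. W T j ^ r) ((g ^^ j) x))"
  proof -
    have "(\<Sum>r<T. proj sm g T r x) = sm (1 / of_nat T) (\<Sum>r<T. \<Sum>j<T. sm (W T r ^ j) ((g ^^ j) x))"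
      unfolding proj_alt V.scale_sum_right by simp
    also have "(\<Sum>r<T. \<Sum>j<T. sm (W T r ^ j) ((g ^^ j) x)) = (\<Sum>j<T. \<Sum>r<T. sm (W T j ^ r) ((g ^^ j) x))"
      by (subst sum.swap) (simp add: W_swap)
    also have "\<dots> = (\<Sum>j<T. sm (\<Sum>r<T. W T j ^ r) ((g ^^ j) x))"
      by (simp add: V.scale_sum_left)
    finally show ?thesis .
  qed
  also have "\<dots> = sm (1 / of_nat T) (sm (of_nat T) x)"
    using T_pos by (subst sum_only0'[where f = "\<lambda>j. sm (\<Sum>r<T. W T j ^ r) ((g ^^ j) x)"]) (auto simp: rou_sum dest: dvd_imp_le)
  also have "\<dots> = x" using T_pos by simp
  finally show ?thesis .
qed

lemma gpow_vac: "(g ^^ j) vac = vac" by (induction j) (auto simp: g_vac)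

lemma proj_vac: "r < T \<Longrightarrow> proj sm g T r vac = (if r = 0 then vac else 0)"
  unfolding proj_alt gpow_vac V.scale_sum_left[symmetric] using T_pos
  by (auto simp: rou_sum dvd_imp_le)

end

context VAL begin

definition Dv :: "'v \<Rightarrow> 'v" where "Dv u = mode u (-2) vac"

lemma D_mode: "mode (Dv u) p w = - sm (of_int p) (mode u (p - 1) w)"
proof -
  have B: "Sum_any (\<lambda>i::nat. sm ((of_int p :: complex) gchoose i)
                    (mode (mode u (-2 + int i) vac) (p + 0 - int i) w))
      = Sum_any (\<lambda>i::nat. sm ((-1) ^ i * ((of_int (-2) :: complex) gchoose i))
                    (mode u (p + (-2) - int i) (mode vac (0 + int i) w)
                     - sm ((-1) powi (-2)) (mode vac (0 + (-2) - int i) (mode u (p + int i) w))))"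
    by (rule borch)
  have r: "(\<lambda>i::nat. sm ((-1) ^ i * ((of_int (-2) :: complex) gchoose i))
                    (mode u (p + (-2) - int i) (mode vac (0 + int i) w)
                     - sm ((-1) powi (-2)) (mode vac (0 + (-2) - int i) (mode u (p + int i) w)))) = (\<lambda>i. 0)"
    by (rule ext) (simp add: mode_vac lin_0[OF mode_lin2])
  have l: "Sum_any (\<lambda>i::nat. sm ((of_int p :: complex) gchoose i)
                    (mode (mode u (-2 + int i) vac) (p + 0 - int i) w))
         = (\<Sum>i\<in>{0,1}. sm ((of_int p :: complex) gchoose i)
                    (mode (mode u (-2 + int i) vac) (p + 0 - int i) w))"
  proof (rule Sum_any.expand_superset)
    show "finite {0::nat, 1}" by simp
    show "{i. sm ((of_int p :: complex) gchoose i) (mode (mode u (-2 + int i) vac) (p + 0 - int i) w) \<noteq> 0} \<subseteq> {0, 1}"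
    proof
      fix i assume "i \<in> {i. sm ((of_int p :: complex) gchoose i) (mode (mode u (-2 + int i) vac) (p + 0 - int i) w) \<noteq> 0}"
      then have ne: "sm ((of_int p :: complex) gchoose i) (mode (mode u (-2 + int i) vac) (p + 0 - int i) w) \<noteq> 0" by simp
      show "i \<in> {0, 1}"
      proof (rule ccontr)
        assume "i \<notin> {0, 1}"
        then have "-2 + int i \<ge> 0" by auto
        then have "mode u (-2 + int i) vac = 0" by (rule mode_pos_vac)
        then show False using ne by (simp add: lin_0[OF mode_lin1])
      qed
    qed
  qed
  have "mode (Dv u) p w + sm (of_int p) (mode u (p - 1) w) = 0"
    using B unfolding r l by (simp add: Dv_def creation)
  then show ?thesis by (simp add: eq_neg_iff_add_eq_0)
qed

lemma Dpow: "(Dv ^^ j) u = sm (fact j) (mode u (- int j - 1) vac)"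
proof (induction j arbitrary: u)
  case 0 then show ?case by (simp add: creation)
next
  case (Suc j)
  have "(Dv ^^ Suc j) u = (Dv ^^ j) (Dv u)" by (simp add: funpow_Suc_right del: funpow.simps)
  also have "\<dots> = sm (fact j) (mode (Dv u) (- int j - 1) vac)" by (rule Suc)
  also have "\<dots> = sm (fact (Suc j)) (mode u (- int (Suc j) - 1) vac)"
    by (simp add: D_mode algebra_simps)
  finally show ?case .
qed

lemma mode_neg_vac: "mode u (- int j - 1) vac = sm (1 / fact j) ((Dv ^^ j) u)"
  by (simp add: Dpow)

definition Lg :: "nat \<Rightarrow> nat \<Rightarrow> 'v set" where
  "Lg N M = {mode u (-2) vac + sm ((of_nat M - of_nat N) / of_nat T) u | u. True}"

definition lam :: "nat \<Rightarrow> nat \<Rightarrow> complex" where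
  "lam N M = (of_nat N - of_nat M) / of_nat T"

lemma Dv_L: "Dv x - sm (lam N M) x \<in> V.span (Lg N M)"
proof -
  have "Dv x - sm (lam N M) x = mode x (-2) vac + sm ((of_nat M - of_nat N) / of_nat T) x"
    by (simp add: Dv_def lam_def diff_divide_distrib V.scale_left_diff_distrib)
  then show ?thesis by (auto simp: Lg_def intro!: V.span_base)
qed

lemma Dpow_L: "(Dv ^^ j) x - sm (lam N M ^ j) x \<in> V.span (Lg N M)"
proof (induction j)
  case 0 then show ?case by (simp add: V.span_zero)
next
  case (Suc j)
  let ?y = "(Dv ^^ j) x"
  have e: "(Dv ^^ Suc j) x - sm (lam N M ^ Suc j) x
        = (Dv ?y - sm (lam N M) ?y) + sm (lam N M) (?y - sm (lam N M ^ j) x)"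
    by (simp add: V.scale_right_diff_distrib)
  show ?case unfolding e by (intro V.span_add V.span_scale Dv_L Suc)
qed

lemma resY_vac:
  assumes K: "1 \<le> K"
  shows "resY sm mode a K x vac
     = (\<Sum>j\<in>{0..nat (K-1)}. sm ((fps_binomial a * fps_ln 1 ^ j) $ nat (K - 1) / fact j) ((Dv ^^ j) x))"
proof -
  have h: "\<forall>k\<ge>0. mode x k vac = 0" by (simp add: mode_pos_vac)
  have "resY sm mode a K x vac = (\<Sum>k\<in>{min 0 (-K)..<0}. sm (cres a K k) (mode x k vac))"
    by (rule resY_sum[OF h])
  also have "\<dots> = (\<Sum>j\<in>{0..nat (K-1)}. sm ((fps_binomial a * fps_ln 1 ^ j) $ nat (K - 1) / fact j) ((Dv ^^ j) x))"
  proof (rule sum.reindex_bij_witness[of _ "\<lambda>j. - int j - 1" "\<lambda>k. nat (- k - 1)"])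
    fix k assume "k \<in> {min 0 (-K)..<0}" then show "- int (nat (- k - 1)) - 1 = k" by simp
  next
    fix k assume "k \<in> {min 0 (-K)..<0}" then show "nat (- k - 1) \<in> {0..nat (K-1)}" using K by auto
  next
    fix j assume "j \<in> {0..nat (K-1)}" then show "nat (- (- int j - 1) - 1) = j" by simp
  next
    fix j assume "j \<in> {0..nat (K-1)}" then show "- int j - 1 \<in> {min 0 (-K)..<0}" using K by auto
  next
    fix k assume "k \<in> {min 0 (-K)..<0}"
    define j where "j = nat (- k - 1)"
    have j: "k = - int j - 1" using \<open>k \<in> {min 0 (-K)..<0}\<close> unfolding j_def by simp
    show "sm ((fps_binomial a * fps_ln 1 ^ nat (- k - 1)) $ nat (K - 1) / fact (nat (- k - 1))) ((Dv ^^ nat (- k - 1)) x)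
          = sm (cres a K k) (mode x k vac)"
      using K unfolding j by (simp add: cres_neg mode_neg_vac mult.commute)
  qed
  finally show ?thesis .
qed

lemma resY_vac_L:
  assumes K: "1 \<le> K"
  shows "resY sm mode a K x vac - sm ((a + lam N M) gchoose nat (K - 1)) x \<in> V.span (Lg N M)"
proof -
  let ?n = "nat (K - 1)"
  let ?c = "\<lambda>j. (fps_binomial a * fps_ln 1 ^ j) $ ?n / fact j"
  have sc: "(a + lam N M) gchoose ?n = (\<Sum>j\<in>{0..?n}. ?c j * lam N M ^ j)"
    by (subst scalar_identity[symmetric]) (simp add: mult_ac)
  have "resY sm mode a K x vac - sm ((a + lam N M) gchoose ?n) x
       = (\<Sum>j\<in>{0..?n}. sm (?c j) ((Dv ^^ j) x - sm (lam N M ^ j) x))"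
    unfolding resY_vac[OF K] sc V.scale_sum_left
    by (simp add: V.scale_right_diff_distrib sum_subtractf)
  also have "\<dots> \<in> V.span (Lg N M)"
    by (intro V.span_sum V.span_scale Dpow_L)
  finally show ?thesis .
qed

end

context VAL begin

lemma bh_lin1: "lin (\<lambda>u. bullet_hom sm mode T r M P N u v)"
  unfolding bullet_hom_def Let_def
  by (intro lin_if lin_sumf lin_smul resY_lin1 lin_zerof)

lemma bh_lin2: "lin (\<lambda>v. bullet_hom sm mode T r M P N u v)"
  unfolding bullet_hom_def Let_def
  by (intro lin_if lin_sumf lin_smul resY_lin2 lin_zerof)

lemma bullet_lin1: "lin (\<lambda>u. bullet sm mode g T M P N u v)"
  unfolding bullet_def
  by (intro lin_sumf, rule lin_comp[OF bh_lin1 proj_lin])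

lemma bullet_lin2: "lin (\<lambda>v. bullet sm mode g T M P N u v)"
  unfolding bullet_def by (intro lin_sumf bh_lin2)

lemma dh_lin1: "lin (\<lambda>u. diamond_hom sm mode T r M N u v)"
  unfolding diamond_hom_def Let_def by (rule resY_lin1)

lemma diamond_lin1: "lin (\<lambda>u. diamond sm mode g T M N u v)"
  unfolding diamond_def
  by (intro lin_sumf, rule lin_comp[OF dh_lin1 proj_lin])

lemma cres_m1: "cres a K (-1) = (if 1 \<le> K then a gchoose nat (K - 1) else 0)"
  using cres_neg[of a K 0] by simp

lemma bh_vac_left: "bullet_hom sm mode T 0 M N N vac w = w"
proof -
  have d1: "delta (M mod T) 0 = 1" by (simp add: delta_def)
  have "N mod T < T" using T_pos by simp
  then have d2: "delta (N mod T) T = 0" by (simp add: delta_def)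
  have "bullet_hom sm mode T 0 M N N vac w =
     (\<Sum>i\<in>{0..N div T}. sm ((-1) ^ i * ((of_int (int (M div T) + int i) :: complex) gchoose i))
        (sm (of_int (int (M div T)) gchoose (M div T + i)) w))"
    unfolding bullet_hom_def Let_def d1 d2
    by (simp add: resY_vac_left cres_m1 nat_add_distrib d2)
  also have "\<dots> = w"
  proof (subst sum_only0)
    fix i :: nat assume "i \<noteq> 0"
    then have "(M div T choose (M div T + i)) = 0" by (simp add: binomial_eq_0)
    then have "(of_nat (M div T) :: complex) gchoose (M div T + i) = 0" by (metis binomial_gbinomial of_nat_0)
    then have "(of_int (int (M div T)) :: complex) gchoose (M div T + i) = 0" by simp
    then show "sm ((-1) ^ i * ((of_int (int (M div T) + int i) :: complex) gchoose i))
        (sm (of_int (int (M div T)) gchoose (M div T + i)) w) = 0" by simp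
  next
    show "sm ((-1) ^ 0 * ((of_int (int (M div T) + int 0) :: complex) gchoose 0))
        (sm (of_int (int (M div T)) gchoose (M div T + 0)) w) = w"
      using binomial_gbinomial[of "M div T" "M div T", where 'a=complex] by simp
  qed
  finally show ?thesis .
qed

lemma bullet_vac_left: "bullet sm mode g T M N N vac w = w"
proof -
  have "bullet sm mode g T M N N vac w = (\<Sum>r<T. if r = 0 then bullet_hom sm mode T 0 M N N vac w else 0)"
    unfolding bullet_def
    by (intro sum.cong refl) (auto simp: proj_vac lin_0[OF bh_lin1])
  also have "\<dots> = w" using T_pos by (simp add: bh_vac_left)
  finally show ?thesis .
qed

end


lemma cond_arith:
  fixes T r a b :: nat
  assumes "r < T" "a < T" "b < T" "(int a - int b) mod int T = int r mod int T"
  shows "int r + int b - int a = int T * delta b (T - r) \<and> delta a r + delta b (T - r) \<ge> 1"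
proof (cases "b \<le> a")
  case True
  have m1: "(int a - int b) mod int T = int a - int b"
    by (rule mod_pos_pos_trivial) (use True assms(2) in linarith)+
  have m2: "int r mod int T = int r"
    by (rule mod_pos_pos_trivial) (use assms(1) in linarith)+
  have e: "int a - int b = int r" using assms(4) unfolding m1 m2 .
  have "\<not> (T - r \<le> b)" using e assms(1,2) by linarith
  then have d1: "delta b (T - r) = 0" by (simp add: delta_def)
  have "r \<le> a" using e by linarith
  then have d2: "delta a r = 1" by (simp add: delta_def)
  show ?thesis unfolding d1 d2 using e by simp
next
  case False
  have "(int a - int b) mod int T = (int a - int b + int T) mod int T" by simp
  also have "\<dots> = int a - int b + int T"
    by (rule mod_pos_pos_trivial) (use False assms(3) in linarith)+
  finally have m1: "(int a - int b) mod int T = int a - int b + int T" .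
  have m2: "int r mod int T = int r"
    by (rule mod_pos_pos_trivial) (use assms(1) in linarith)+
  have e: "int a - int b + int T = int r" using assms(4) unfolding m1 m2 .
  have "T - r \<le> b" using e assms(1) by linarith
  then have d1: "delta b (T - r) = 1" by (simp add: delta_def)
  have d2: "delta a r \<ge> 0" by (simp add: delta_def)
  show ?thesis unfolding d1 using e d2 by simp
qed

lemma noncond_arith:
  fixes T r M N :: nat and z :: int
  assumes "int r + int N - int M = int T * z"
  shows "(int (M mod T) - int (N mod T)) mod int T = int r mod int T"
proof -
  have a: "int (M mod T) = int M mod int T" "int (N mod T) = int N mod int T" by (simp_all add: zmod_int)
  have "(int (M mod T) - int (N mod T)) mod int T = (int M - int N) mod int T"
    unfolding a by (rule mod_diff_eq)
  also have "int M - int N = int r + int T * (- z)" using assms by (simp add: algebra_simps)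
  also have "(int r + int T * (- z)) mod int T = int r mod int T" by (rule mod_mult_self2)
  finally show ?thesis .
qed

lemma gchoose_nonzero:
  fixes a :: complex
  assumes "\<And>z::int. a \<noteq> of_int z"
  shows "a gchoose k \<noteq> 0"
proof
  assume "a gchoose k = 0"
  then have "pochhammer (a - of_nat k + 1) k = 0" by (simp add: gbinomial_pochhammer')
  then obtain j where j: "a - of_nat k + 1 = - of_nat j" by (auto simp: pochhammer_eq_0_iff)
  have "a = of_int (int k - 1 - int j)" using j by (simp add: algebra_simps)
  then show False using assms by blast
qed

context VAL begin

lemma nat_divmod_int: "int N = int T * int (N div T) + int (N mod T)"
  by (metis div_mult_mod_eq of_nat_add of_nat_mult mult.commute)

lemma alpha_lam:
  fixes e :: int
  shows "(-1 + of_int e + of_nat r / of_nat T) + lam N M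
       = (of_int (int T * (e - 1) + int r + int N - int M) :: complex) / of_nat T"
  using T_pos by (simp add: lam_def field_simps)

lemma bh_ract_vac:
  assumes r: "r < T"
  shows "bullet_hom sm mode T r M M N x vac
     - (if (int (M mod T) - int (N mod T)) mod int T = int r mod int T then x else 0) \<in> V.span (Lg N M)"
proof (cases "(int (M mod T) - int (N mod T)) mod int T = int r mod int T")
  case False
  then show ?thesis unfolding bullet_hom_def Let_def by (simp add: V.span_zero)
next
  case cond: True
  define fm where "fm = int (M div T)"
  define fn where "fn = int (N div T)"
  define dm where "dm = delta (M mod T) r"
  define dn where "dn = delta (N mod T) (T - r)"
  have E: "int r + int (N mod T) - int (M mod T) = int T * dn \<and> dm + dn \<ge> 1"
    unfolding dm_def dn_def using T_pos r cond by (intro cond_arith) auto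
  define cf where "cf i = (-1) ^ i * ((of_int (fm + fn - fm - 1 + dm + dn + int i) :: complex) gchoose i)" for i :: nat
  define al where "al = -1 + of_int fm + of_int dm + of_nat r / (of_nat T :: complex)"
  define Ki where "Ki i = fm + fn - fm + dm + dn + int i" for i :: nat
  define Y where "Y = fn + dm + dn - 1"
  have BH: "bullet_hom sm mode T r M M N x vac = (\<Sum>i\<in>{0..M div T}. sm (cf i) (resY sm mode al (Ki i) x vac))"
    unfolding bullet_hom_def Let_def if_P[OF cond] cf_def al_def Ki_def fm_def fn_def dm_def dn_def ..
  have Y0: "Y \<ge> 0" using E unfolding Y_def fn_def by simp
  have I: "int T * (fm + dm - 1) + int r + int N - int M = int T * Y"
    using E nat_divmod_int[of N] nat_divmod_int[of M] unfolding Y_def fm_def fn_def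
    by (simp add: algebra_simps)
  have AL: "al + lam N M = of_int Y"
  proof -
    have "al + lam N M = (of_int (int T * (fm + dm - 1) + int r + int N - int M) :: complex) / of_nat T"
      unfolding al_def using alpha_lam[of "fm + dm" r N M] by (simp add: algebra_simps)
    also have "\<dots> = of_int Y" unfolding I using T_pos by simp
    finally show ?thesis .
  qed
  define sc where "sc i = (al + lam N M) gchoose nat (Ki i - 1)" for i :: nat
  have Kge: "1 \<le> Ki i" for i using E unfolding Ki_def fn_def by simp
  have mem: "resY sm mode al (Ki i) x vac - sm (sc i) x \<in> V.span (Lg N M)" for i
    unfolding sc_def by (rule resY_vac_L[OF Kge])
  have scv: "sc i = (if i = 0 then 1 else 0)" for i
  proof -
    have k: "nat (Ki i - 1) = nat Y + i" unfolding Ki_def Y_def using Y0 by (simp add: Y_def)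
    have "sc i = of_nat (nat Y) gchoose (nat Y + i)" unfolding sc_def AL k using Y0 by simp
    also have "\<dots> = of_nat (nat Y choose (nat Y + i))" by (simp add: binomial_gbinomial)
    also have "\<dots> = (if i = 0 then 1 else 0)" by (simp add: binomial_eq_0)
    finally show ?thesis .
  qed
  have cf0: "cf 0 = 1" unfolding cf_def by simp
  have S1: "(\<Sum>i\<in>{0..M div T}. cf i * sc i) = 1"
    by (subst sum_only0) (auto simp: scv cf0)
  have "bullet_hom sm mode T r M M N x vac - x
      = (\<Sum>i\<in>{0..M div T}. sm (cf i) (resY sm mode al (Ki i) x vac - sm (sc i) x))
        + (sm (\<Sum>i\<in>{0..M div T}. cf i * sc i) x - x)"
    unfolding BH by (simp add: V.scale_right_diff_distrib sum_subtractf V.scale_sum_left)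
  also have "\<dots> \<in> V.span (Lg N M)"
    unfolding S1 by (auto intro!: V.span_add V.span_sum V.span_scale mem V.span_zero)
  finally show ?thesis using cond by simp
qed

lemma dh_vac:
  assumes r: "r < T" and nc: "\<not> (int (M mod T) - int (N mod T)) mod int T = int r mod int T"
  shows "\<exists>s. s \<noteq> 0 \<and> (\<forall>x. diamond_hom sm mode T r M N x vac - sm s x \<in> V.span (Lg N M))"
proof -
  define fm where "fm = int (M div T)"
  define fn where "fn = int (N div T)"
  define dm where "dm = delta (M mod T) r"
  define dn where "dn = delta (N mod T) (T - r)"
  define al where "al = -1 + of_int dm + of_int fm + of_nat r / (of_nat T :: complex)"
  define K where "K = fm + fn + dm + dn + 1"
  have DH: "diamond_hom sm mode T r M N x vac = resY sm mode al K x vac" for x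
    unfolding diamond_hom_def Let_def al_def K_def fm_def fn_def dm_def dn_def ..
  have K1: "1 \<le> K" unfolding K_def fm_def fn_def dm_def dn_def by (simp add: delta_def)
  have nz: "(al + lam N M) gchoose nat (K - 1) \<noteq> 0"
  proof (rule gchoose_nonzero)
    fix z :: int
    show "al + lam N M \<noteq> of_int z"
    proof
      assume h: "al + lam N M = of_int z"
      have "al + lam N M = (of_int (int T * (dm + fm - 1) + int r + int N - int M) :: complex) / of_nat T"
        unfolding al_def using alpha_lam[of "dm + fm" r N M] by (simp add: algebra_simps)
      then have "(of_int (int T * (dm + fm - 1) + int r + int N - int M) :: complex) = of_int (int T * z)"
        using h T_pos by (simp add: field_simps)
      then have "int T * (dm + fm - 1) + int r + int N - int M = int T * z" by (simp only: of_int_eq_iff)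
      then have "int r + int N - int M = int T * (z - dm - fm + 1)" by (simp add: algebra_simps)
      then show False using nc noncond_arith by blast
    qed
  qed
  show ?thesis
    using nz resY_vac_L[OF K1, of al _ N M] unfolding DH by blast
qed

end

context VAL begin

definition Dg :: "nat \<Rightarrow> nat \<Rightarrow> 'v set" where
  "Dg N M = {diamond sm mode g T M N u v | u v. True}"

definition O2g :: "nat \<Rightarrow> nat \<Rightarrow> 'v set" where
  "O2g N M = {bullet sm mode g T M P3 N u
          (bullet sm mode g T M P1 P3 (bullet sm mode g T P1 P2 P3 a b) c
           - bullet sm mode g T M P2 P3 a (bullet sm mode g T M P1 P2 b c))
        | u a b c P1 P2 P3. True}"

definition O3g :: "nat \<Rightarrow> nat \<Rightarrow> 'v set" where
  "O3g N M = {bullet sm mode g T M P1 N (bullet sm mode g T P1 P2 N a x) b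
        | a b x P1 P2. x \<in> O1 sm mode vac g T P2 P1}"

definition Ob :: "nat \<Rightarrow> nat \<Rightarrow> 'v set" where
  "Ob N M = V.span (Dg N M \<union> Lg N M \<union> O2g N M \<union> O3g N M)"

lemma O1_eq: "O1 sm mode vac g T N M = V.span (Dg N M \<union> Lg N M)"
  unfolding O1_def Lnm_def V.span_Un Dg_def Lg_def by simp

lemma Onm_eq: "Onm sm mode vac g T N M = Ob N M"
proof -
  have "Ob N M = {w + z | w z. w \<in> V.span (Dg N M \<union> Lg N M \<union> O2g N M) \<and> z \<in> V.span (O3g N M)}"
    unfolding Ob_def by (rule V.span_Un)
  also have "V.span (Dg N M \<union> Lg N M \<union> O2g N M) = {x + y | x y. x \<in> O1 sm mode vac g T N M \<and> y \<in> V.span (O2g N M)}"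
    unfolding O1_eq by (rule V.span_Un)
  finally have e: "Ob N M = {w + z | w z. w \<in> {x + y | x y. x \<in> O1 sm mode vac g T N M \<and> y \<in> V.span (O2g N M)} \<and> z \<in> V.span (O3g N M)}" .
  have o2: "O2 sm mode g T N M = V.span (O2g N M)" unfolding O2_def O2g_def ..
  have o3: "O3 sm mode vac g T N M = V.span (O3g N M)" unfolding O3_def O3g_def ..
  show ?thesis
  proof (rule set_eqI, rule iffI)
    fix t assume "t \<in> Onm sm mode vac g T N M"
    then obtain x y z where t: "t = x + y + z" "x \<in> O1 sm mode vac g T N M" "y \<in> V.span (O2g N M)" "z \<in> V.span (O3g N M)"
      unfolding Onm_def o2 o3 by blast
    have "x + y \<in> {x + y | x y. x \<in> O1 sm mode vac g T N M \<and> y \<in> V.span (O2g N M)}" using t by blast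
    then show "t \<in> Ob N M" unfolding e using t by blast
  next
    fix t assume "t \<in> Ob N M"
    then obtain w z where wz: "t = w + z" "w \<in> {x + y | x y. x \<in> O1 sm mode vac g T N M \<and> y \<in> V.span (O2g N M)}" "z \<in> V.span (O3g N M)"
      unfolding e by blast
    then obtain x y where xy: "w = x + y" "x \<in> O1 sm mode vac g T N M" "y \<in> V.span (O2g N M)" by blast
    show "t \<in> Onm sm mode vac g T N M" unfolding Onm_def o2 o3 using wz xy by blast
  qed
qed

lemma Ob_add: "x \<in> Ob N M \<Longrightarrow> y \<in> Ob N M \<Longrightarrow> x + y \<in> Ob N M" unfolding Ob_def by (rule V.span_add)
lemma Ob_diff: "x \<in> Ob N M \<Longrightarrow> y \<in> Ob N M \<Longrightarrow> x - y \<in> Ob N M" unfolding Ob_def by (rule V.span_diff)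
lemma Ob_scale: "x \<in> Ob N M \<Longrightarrow> sm c x \<in> Ob N M" unfolding Ob_def by (rule V.span_scale)
lemma Ob_zero: "0 \<in> Ob N M" unfolding Ob_def by (rule V.span_zero)
lemma O1_Ob: "x \<in> O1 sm mode vac g T N M \<Longrightarrow> x \<in> Ob N M"
  unfolding O1_eq Ob_def by (rule subsetD[OF V.span_mono, rotated]) auto
lemma L_Ob: "x \<in> V.span (Lg N M) \<Longrightarrow> x \<in> Ob N M"
  unfolding Ob_def by (rule subsetD[OF V.span_mono, rotated]) auto
lemma O2g_Ob: "x \<in> O2g N M \<Longrightarrow> x \<in> Ob N M"
  unfolding Ob_def by (rule V.span_base) auto
lemma O3g_Ob: "x \<in> O3g N M \<Longrightarrow> x \<in> Ob N M"
  unfolding Ob_def by (rule V.span_base) auto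
lemma Dg_Ob: "x \<in> Dg N M \<Longrightarrow> x \<in> Ob N M"
  unfolding Ob_def by (rule V.span_base) auto

lemma Diff_O2g:
  "bullet sm mode g T M P1 N (bullet sm mode g T P1 P2 N a b) c
   - bullet sm mode g T M P2 N a (bullet sm mode g T M P1 P2 b c) \<in> O2g N M"
proof -
  let ?D = "bullet sm mode g T M P1 N (bullet sm mode g T P1 P2 N a b) c
   - bullet sm mode g T M P2 N a (bullet sm mode g T M P1 P2 b c)"
  have "?D = bullet sm mode g T M N N vac ?D" by (simp only: bullet_vac_left)
  also have "\<dots> \<in> O2g N M" unfolding O2g_def by blast
  finally show ?thesis .
qed

lemma Diff_Ob:
  "bullet sm mode g T M P1 N (bullet sm mode g T P1 P2 N a b) c
   - bullet sm mode g T M P2 N a (bullet sm mode g T M P1 P2 b c) \<in> Ob N M"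
  by (rule O2g_Ob[OF Diff_O2g])

lemma proj_nc_Ob:
  assumes r: "r < T" and nc: "\<not> (int (M mod T) - int (N mod T)) mod int T = int r mod int T"
  shows "proj sm g T r w \<in> Ob N M"
proof -
  obtain s where s: "s \<noteq> 0" "\<And>x. diamond_hom sm mode T r M N x vac - sm s x \<in> V.span (Lg N M)"
    using dh_vac[OF r nc] by blast
  let ?y = "proj sm g T r w"
  have "diamond sm mode g T M N ?y vac = (\<Sum>r'<T. if r' = r then diamond_hom sm mode T r M N ?y vac else 0)"
    unfolding diamond_def
  proof (intro sum.cong refl)
    fix r' assume "r' \<in> {..<T}"
    then have r': "r' < T" by simp
    show "diamond_hom sm mode T r' M N (proj sm g T r' ?y) vac = (if r' = r then diamond_hom sm mode T r M N ?y vac else 0)"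
      unfolding proj_proj[OF r r'] using lin_0[OF dh_lin1] by simp
  qed
  also have "\<dots> = diamond_hom sm mode T r M N ?y vac" using r by simp
  finally have dd: "diamond sm mode g T M N ?y vac = diamond_hom sm mode T r M N ?y vac" .
  have "diamond sm mode g T M N ?y vac \<in> Ob N M" by (rule Dg_Ob) (auto simp: Dg_def)
  then have m: "diamond_hom sm mode T r M N ?y vac - (diamond_hom sm mode T r M N ?y vac - sm s ?y) \<in> Ob N M"
    using L_Ob[OF s(2)[of ?y]] unfolding dd by (rule Ob_diff)
  have "diamond_hom sm mode T r M N ?y vac - (diamond_hom sm mode T r M N ?y vac - sm s ?y) = sm s ?y" by simp
  with m have "sm s ?y \<in> Ob N M" by simp
  then have "sm (1 / s) (sm s ?y) \<in> Ob N M" by (rule Ob_scale)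
  then show ?thesis using s(1) by simp
qed

lemma ract_vac_Ob: "bullet sm mode g T M M N w vac - w \<in> Ob N M"
proof -
  have "bullet sm mode g T M M N w vac - w
     = (\<Sum>r<T. bullet_hom sm mode T r M M N (proj sm g T r w) vac - proj sm g T r w)"
    unfolding bullet_def sum_subtractf sum_proj ..
  also have "\<dots> \<in> Ob N M"
    unfolding Ob_def
  proof (rule V.span_sum)
    fix r assume "r \<in> {..<T}"
    then have r: "r < T" by simp
    show "bullet_hom sm mode T r M M N (proj sm g T r w) vac - proj sm g T r w
          \<in> V.span (Dg N M \<union> Lg N M \<union> O2g N M \<union> O3g N M)"
    proof (cases "(int (M mod T) - int (N mod T)) mod int T = int r mod int T")
      case True
      then show ?thesis using L_Ob[OF bh_ract_vac[OF r, of M N "proj sm g T r w"]] by (simp add: Ob_def)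
    next
      case False
      have a: "bullet_hom sm mode T r M M N (proj sm g T r w) vac \<in> Ob N M"
        using L_Ob[OF bh_ract_vac[OF r, of M N "proj sm g T r w"]] False by simp
      show ?thesis using Ob_diff[OF a proj_nc_Ob[OF r False]] by (simp add: Ob_def)
    qed
  qed
  finally show ?thesis .
qed


abbreviation bl where "bl \<equiv> bullet sm mode g T"

lemma bl1_diff: "bl M P N (x - y) v = bl M P N x v - bl M P N y v" by (rule lin_diff[OF bullet_lin1])
lemma bl2_diff: "bl M P N u (x - y) = bl M P N u x - bl M P N u y" by (rule lin_diff[OF bullet_lin2])
lemma bl1_add: "bl M P N (x + y) v = bl M P N x v + bl M P N y v" by (rule lin_add[OF bullet_lin1])
lemma bl2_add: "bl M P N u (x + y) = bl M P N u x + bl M P N u y" by (rule lin_add[OF bullet_lin2])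

lemma gen_O1: "x \<in> Dg N M \<union> Lg N M \<Longrightarrow> x \<in> O1 sm mode vac g T N M"
  unfolding O1_eq by (rule V.span_base)

lemma lact_O1: "x \<in> O1 sm mode vac g T N M \<Longrightarrow> bl M N N u x \<in> Ob N M"
proof -
  assume x: "x \<in> O1 sm mode vac g T N M"
  let ?z = "bl M N N u x"
  have a: "bl M M N ?z vac \<in> Ob N M" using x by (intro O3g_Ob) (unfold O3g_def, blast)
  have "bl M M N ?z vac - (bl M M N ?z vac - ?z) \<in> Ob N M" by (rule Ob_diff[OF a ract_vac_Ob])
  then show ?thesis by simp
qed

lemma lact_O2g: "y \<in> O2g N M \<Longrightarrow> bl M N N u y \<in> Ob N M"
proof -
  assume "y \<in> O2g N M"
  then obtain u' a b c P1 P2 P3 where y: "y = bl M P3 N u'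
          (bl M P1 P3 (bl P1 P2 P3 a b) c - bl M P2 P3 a (bl M P1 P2 b c))"
    unfolding O2g_def by blast
  define X where "X = bl M P1 P3 (bl P1 P2 P3 a b) c - bl M P2 P3 a (bl M P1 P2 b c)"
  have X: "bl M P3 N w X \<in> O2g N M" for w unfolding X_def O2g_def by blast
  have e: "bl M N N u y = bl M P3 N (bl P3 N N u u') X
      - (bl M P3 N (bl P3 N N u u') X - bl M N N u (bl M P3 N u' X))" unfolding y X_def by simp
  show ?thesis unfolding e by (intro Ob_diff O2g_Ob X Diff_Ob)
qed

lemma lact_Diff:
  "bl M N N u (bl M P1 N (bl P1 P2 N a b) c - bl M P2 N a (bl M P1 P2 b c)) \<in> Ob N M"
  by (rule lact_O2g[OF Diff_O2g])

lemma lact_O3g: "y \<in> O3g N M \<Longrightarrow> bl M N N u y \<in> Ob N M"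
proof -
  assume "y \<in> O3g N M"
  then obtain a b x P1 P2 where y: "y = bl M P1 N (bl P1 P2 N a x) b" and x: "x \<in> O1 sm mode vac g T P2 P1"
    unfolding O3g_def by blast
  define W where "W = bl M P1 P2 x b"
  define a' where "a' = bl P2 N N u a"
  define D1 where "D1 = bl M P1 N (bl P1 P2 N a x) b - bl M P2 N a W"
  define D2 where "D2 = bl M P2 N (bl P2 N N u a) W - bl M N N u (bl M P2 N a W)"
  define G3 where "G3 = bl M P1 N (bl P1 P2 N a' x) b"
  define D3 where "D3 = bl M P1 N (bl P1 P2 N a' x) b - bl M P2 N a' W"
  have yy: "y = D1 + bl M P2 N a W" unfolding D1_def y by simp
  have e: "bl M N N u y = bl M N N u D1 + ((G3 - D3) - D2)"
    unfolding yy bl2_add D2_def G3_def D3_def a'_def by simp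
  have m1: "bl M N N u D1 \<in> Ob N M" unfolding D1_def W_def by (rule lact_Diff)
  have m2: "G3 \<in> Ob N M" unfolding G3_def using x by (intro O3g_Ob) (unfold O3g_def, blast)
  have m3: "D3 \<in> Ob N M" unfolding D3_def W_def by (rule Diff_Ob)
  have m4: "D2 \<in> Ob N M" unfolding D2_def by (rule Diff_Ob)
  show ?thesis unfolding e by (intro Ob_add Ob_diff m1 m2 m3 m4)
qed

lemma lact_Ob: "w \<in> Ob N M \<Longrightarrow> bl M N N u w \<in> Ob N M"
  unfolding Ob_def[of N M]
proof (rule span_lin_closed[OF bullet_lin2])
  fix x assume "x \<in> Dg N M \<union> Lg N M \<union> O2g N M \<union> O3g N M"
  then have "bl M N N u x \<in> Ob N M"
    using lact_O1[OF gen_O1] lact_O2g lact_O3g by blast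
  then show "bl M N N u x \<in> V.span (Dg N M \<union> Lg N M \<union> O2g N M \<union> O3g N M)" by (simp add: Ob_def)
qed

lemma ract_O1: "x \<in> O1 sm mode vac g T N M \<Longrightarrow> bl M M N x v \<in> Ob N M"
proof -
  assume x: "x \<in> O1 sm mode vac g T N M"
  have "bl M M N x v = bl M M N (bl M N N vac x) v" by (simp only: bullet_vac_left)
  also have "\<dots> \<in> Ob N M" using x by (intro O3g_Ob) (unfold O3g_def, blast)
  finally show ?thesis .
qed

lemma ract_O3g: "y \<in> O3g N M \<Longrightarrow> bl M M N y v \<in> Ob N M"
proof -
  assume "y \<in> O3g N M"
  then obtain a b x P1 P2 where y: "y = bl M P1 N (bl P1 P2 N a x) b" and x: "x \<in> O1 sm mode vac g T P2 P1"
    unfolding O3g_def by blast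
  define Z where "Z = bl P1 P2 N a x"
  have e: "bl M M N y v = (bl M M N (bl M P1 N Z b) v - bl M P1 N Z (bl M M P1 b v)) + bl M P1 N Z (bl M M P1 b v)"
    unfolding y Z_def by simp
  have m: "bl M P1 N Z (bl M M P1 b v) \<in> Ob N M" unfolding Z_def using x by (intro O3g_Ob) (unfold O3g_def, blast)
  show ?thesis unfolding e by (intro Ob_add Diff_Ob m)
qed

lemma ract_O2g: "y \<in> O2g N M \<Longrightarrow> bl M M N y v \<in> Ob N M"
proof -
  assume "y \<in> O2g N M"
  then obtain u' a b c P1 P2 P3 where y: "y = bl M P3 N u'
          (bl M P1 P3 (bl P1 P2 P3 a b) c - bl M P2 P3 a (bl M P1 P2 b c))"
    unfolding O2g_def by blast
  define A where "A = bl P1 P2 P3 a b"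
  define Bc where "Bc = bl M P1 P2 b c"
  define X where "X = bl M P1 P3 A c - bl M P2 P3 a Bc"
  define c' where "c' = bl M M P1 c v"
  define E1 where "E1 = bl M M P3 (bl M P1 P3 A c) v - bl M P1 P3 A c'"
  define E2 where "E2 = bl M P1 P3 A c' - bl M P2 P3 a (bl M P1 P2 b c')"
  define E3 where "E3 = bl M M P3 (bl M P2 P3 a Bc) v - bl M P2 P3 a (bl M M P2 Bc v)"
  define E4 where "E4 = bl M M P2 Bc v - bl M P1 P2 b c'"
  define Dx where "Dx = bl M M N (bl M P3 N u' X) v - bl M P3 N u' (bl M M P3 X v)"
  define D5 where "D5 = bl M P2 N (bl P2 P3 N u' a) E4 - bl M P3 N u' (bl M P2 P3 a E4)"
  have q: "bl M M P3 X v = E1 + E2 - E3 - bl M P2 P3 a E4"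
    unfolding X_def E1_def E2_def E3_def E4_def bl1_diff bl2_diff by (simp add: algebra_simps)
  have e: "bl M M N y v = Dx + (bl M P3 N u' E1 + bl M P3 N u' E2 - bl M P3 N u' E3
             - (bl M P2 N (bl P2 P3 N u' a) E4 - D5))"
    unfolding y Dx_def D5_def A_def[symmetric] Bc_def[symmetric] X_def[symmetric] q bl2_add bl2_diff by simp
  have o1: "bl M P3 N u' E1 \<in> Ob N M" unfolding E1_def c'_def by (intro O2g_Ob) (unfold O2g_def, blast)
  have o2: "bl M P3 N u' E2 \<in> Ob N M" unfolding E2_def A_def by (intro O2g_Ob) (unfold O2g_def, blast)
  have o3: "bl M P3 N u' E3 \<in> Ob N M" unfolding E3_def by (intro O2g_Ob) (unfold O2g_def, blast)
  have o4: "bl M P2 N (bl P2 P3 N u' a) E4 \<in> Ob N M" unfolding E4_def Bc_def c'_def by (intro O2g_Ob) (unfold O2g_def, blast)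
  have o5: "D5 \<in> Ob N M" unfolding D5_def by (rule Diff_Ob)
  have o6: "Dx \<in> Ob N M" unfolding Dx_def by (rule Diff_Ob)
  show ?thesis unfolding e by (intro Ob_add Ob_diff o1 o2 o3 o4 o5 o6)
qed

lemma ract_Ob: "w \<in> Ob N M \<Longrightarrow> bl M M N w v \<in> Ob N M"
  unfolding Ob_def[of N M]
proof (rule span_lin_closed[OF bullet_lin1])
  fix x assume "x \<in> Dg N M \<union> Lg N M \<union> O2g N M \<union> O3g N M"
  then have "bl M M N x v \<in> Ob N M"
    using ract_O1[OF gen_O1] ract_O2g ract_O3g by blast
  then show "bl M M N x v \<in> V.span (Dg N M \<union> Lg N M \<union> O2g N M \<union> O3g N M)" by (simp add: Ob_def)
qed

end

theorem theorem3p8: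
  fixes sm :: "complex \<Rightarrow> 'v::ab_group_add \<Rightarrow> 'v"
    and mode :: "'v \<Rightarrow> int \<Rightarrow> 'v \<Rightarrow> 'v"
    and vac :: 'v and g :: "'v \<Rightarrow> 'v" and T N M :: nat
  assumes VA: "vertex_algebra sm mode vac"
    and aut: "va_automorphism sm mode vac g T"
  defines "Obig \<equiv> Onm sm mode vac g T N M"
    and "lact \<equiv> bullet sm mode g T M N N"
    and "ract \<equiv> bullet sm mode g T M M N"
    and "prodN \<equiv> bullet sm mode g T N N N"
    and "prodM \<equiv> bullet sm mode g T M M M"
  shows
    "(\<forall>w. Vector_Spaces.linear sm sm (\<lambda>u. lact u w))
   \<and> (\<forall>u. Vector_Spaces.linear sm sm (\<lambda>w. lact u w))
   \<and> (\<forall>v. Vector_Spaces.linear sm sm (\<lambda>w. ract w v))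
   \<and> (\<forall>w. Vector_Spaces.linear sm sm (\<lambda>v. ract w v))
   \<and> (\<forall>u w. u \<in> On sm mode vac g T N \<longrightarrow> lact u w \<in> Obig)
   \<and> (\<forall>u w. w \<in> Obig \<longrightarrow> lact u w \<in> Obig)
   \<and> (\<forall>w v. w \<in> Obig \<longrightarrow> ract w v \<in> Obig)
   \<and> (\<forall>w v. v \<in> On sm mode vac g T M \<longrightarrow> ract w v \<in> Obig)
   \<and> (\<forall>u u' w. lact (prodN u u') w - lact u (lact u' w) \<in> Obig)
   \<and> (\<forall>w. lact vac w - w \<in> Obig)
   \<and> (\<forall>w v v'. ract (ract w v) v' - ract w (prodM v v') \<in> Obig)
   \<and> (\<forall>w. ract w vac - w \<in> Obig)
   \<and> (\<forall>u w v. ract (lact u w) v - lact u (ract w v) \<in> Obig)"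
proof -
  interpret VAL sm mode vac g T by (rule VAL.intro[OF VA aut])
  have OB: "Obig = Ob N M" unfolding Obig_def by (rule Onm_eq)
  have c1: "\<forall>w. Vector_Spaces.linear sm sm (\<lambda>u. lact u w)"
    unfolding lact_def lin_linear[symmetric] by (simp add: bullet_lin1)
  have c2: "\<forall>u. Vector_Spaces.linear sm sm (\<lambda>w. lact u w)"
    unfolding lact_def lin_linear[symmetric] by (simp add: bullet_lin2)
  have c3: "\<forall>v. Vector_Spaces.linear sm sm (\<lambda>w. ract w v)"
    unfolding ract_def lin_linear[symmetric] by (simp add: bullet_lin1)
  have c4: "\<forall>w. Vector_Spaces.linear sm sm (\<lambda>v. ract w v)"
    unfolding ract_def lin_linear[symmetric] by (simp add: bullet_lin2)
  have c5: "\<forall>u w. u \<in> On sm mode vac g T N \<longrightarrow> lact u w \<in> Obig"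
  proof (intro allI impI)
    fix u w assume u: "u \<in> On sm mode vac g T N"
    have "lact u w = bl M N N (bl N N N vac u) w" unfolding lact_def by (simp only: bullet_vac_left)
    also have "\<dots> \<in> Ob N M" using u unfolding On_def by (intro O3g_Ob) (unfold O3g_def, blast)
    finally show "lact u w \<in> Obig" unfolding OB .
  qed
  have c6: "\<forall>u w. w \<in> Obig \<longrightarrow> lact u w \<in> Obig"
    unfolding OB lact_def using lact_Ob by blast
  have c7: "\<forall>w v. w \<in> Obig \<longrightarrow> ract w v \<in> Obig"
    unfolding OB ract_def using ract_Ob by blast
  have c8: "\<forall>w v. v \<in> On sm mode vac g T M \<longrightarrow> ract w v \<in> Obig"
  proof (intro allI impI)
    fix w v assume v: "v \<in> On sm mode vac g T M"
    let ?z = "bl M M N w v"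
    have a: "bl M M N ?z vac \<in> Ob N M" using v unfolding On_def by (intro O3g_Ob) (unfold O3g_def, blast)
    have "bl M M N ?z vac - (bl M M N ?z vac - ?z) \<in> Ob N M" by (rule Ob_diff[OF a ract_vac_Ob])
    then show "ract w v \<in> Obig" unfolding OB ract_def by simp
  qed
  have c9: "\<forall>u u' w. lact (prodN u u') w - lact u (lact u' w) \<in> Obig"
    unfolding OB lact_def prodN_def using Diff_Ob[of M N N N] by blast
  have c10: "\<forall>w. lact vac w - w \<in> Obig"
    unfolding OB lact_def by (simp add: bullet_vac_left Ob_zero)
  have c11: "\<forall>w v v'. ract (ract w v) v' - ract w (prodM v v') \<in> Obig"
    unfolding OB ract_def prodM_def using Diff_Ob[of M M N M] by blast
  have c12: "\<forall>w. ract w vac - w \<in> Obig"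
    unfolding OB ract_def using ract_vac_Ob by blast
  have c13: "\<forall>u w v. ract (lact u w) v - lact u (ract w v) \<in> Obig"
    unfolding OB ract_def lact_def using Diff_Ob[of M M N N] by blast
  show ?thesis using c1 c2 c3 c4 c5 c6 c7 c8 c9 c10 c11 c12 c13 by blast
qed

end
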